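(* Let $b\ge 2$. For every finite nonempty string $I$ of base-$b$ digits there exist infinitely many $b$-wMRH numbers whose base-$b$ representation contains $I$ as a contiguous substring.
   Context: Fix a base $b\ge 2$. $s_b(N)$ is the sum of the base-$b$ digits of $N$. For a positive integer $X$, its reversal $X^R$ is the integer whose base-$b$ representation is that of $X$ written in reverse order (leading zeros of the result are dropped). A positive integer $N$ is a $b$-wMRH number if there exists an integer $A\ge 0$ such that $N=(A+s_b(N))\cdot(A+s_b(N))^R$. *)

theory Defs
  imports Main "HOL-Library.Sublist"
begin

fun digits :: "nat \<Rightarrow> nat \<Rightarrow> nat list" where
  "digits b n = (if n = 0 \<or> b < 2 then [] else n mod b # digits b (n div b))"

fun from_digits :: "nat \<Rightarrow> nat list \<Rightarrow> nat" where
  "from_digits b [] = 0"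
| "from_digits b (d # ds) = d + b * from_digits b ds"

definition repr :: "nat \<Rightarrow> nat \<Rightarrow> nat list" where
  "repr b n = rev (digits b n)"

definition digit_sum :: "nat \<Rightarrow> nat \<Rightarrow> nat" where
  "digit_sum b n = sum_list (digits b n)"

text \<open>Reversal: the number whose representation is repr b X reversed (leading zeros dropped).\<close>
definition reversal :: "nat \<Rightarrow> nat \<Rightarrow> nat" where
  "reversal b X = from_digits b (rev (rev (repr b X)))"

definition wMRH :: "nat \<Rightarrow> nat \<Rightarrow> bool" where
  "wMRH b N \<longleftrightarrow> N > 0 \<and>
     (\<exists>A::nat. N = (A + digit_sum b N) * reversal b (A + digit_sum b N))"

end

theory Submission
  imports Defs "HOL-Library.Infinite_Set"
begin

declare digits.simps[simp del]

lemma digits_0[simp]: "digits b 0 = []"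
  by (subst digits.simps) simp

lemma digits_1: "b \<ge> 2 \<Longrightarrow> digits b 1 = [1]"
  by (subst digits.simps) simp

lemma fd_append: "from_digits b (xs @ ys) = from_digits b xs + b ^ length xs * from_digits b ys"
  by (induction xs) (auto simp: algebra_simps)

lemma fd_zeros: "from_digits b (replicate n 0) = 0"
  by (induction n) auto

lemma digits_L2:
  assumes "b \<ge> 2" "\<forall>d\<in>set ds. d < b" "M > 0"
  shows "digits b (from_digits b ds + b ^ length ds * M) = ds @ digits b M"
  using assms(2)
proof (induction ds)
  case Nil
  then show ?case by simp
next
  case (Cons d ds)
  let ?r = "from_digits b ds + b ^ length ds * M"
  have r: "?r > 0" using assms by simp
  have d: "d < b" using Cons by simp
  have eq: "from_digits b (d # ds) + b ^ length (d # ds) * M = d + b * ?r"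
    by (simp add: algebra_simps)
  have m: "(d + b * ?r) mod b = d" using d by simp
  have q: "(d + b * ?r) div b = ?r" using d assms(1) by simp
  have pos: "d + b * ?r \<noteq> 0" using r assms(1) by simp
  have "digits b (d + b * ?r) = d # digits b ?r"
    using m q pos assms(1) by (subst digits.simps) simp
  then have "digits b (from_digits b (d # ds) + b ^ length (d # ds) * M) = d # digits b ?r"
    by (simp only: eq)
  with Cons show ?case by simp
qed

lemma digits_pow:
  assumes "b \<ge> 2" "n > 0"
  shows "digits b (n * b ^ k) = replicate k 0 @ digits b n"
proof (induction k)
  case 0 then show ?case by simp
next
  case (Suc k)
  have "n * b ^ Suc k = from_digits b [0] + b ^ length [0::nat] * (n * b ^ k)"
    by simp
  moreover have "n * b ^ k > 0" using assms by simp
  ultimately have "digits b (n * b ^ Suc k) = 0 # digits b (n * b ^ k)"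
    using digits_L2[OF assms(1), of "[0]" "n * b ^ k"] assms by (simp add: mult.left_commute)
  with Suc show ?case by (simp add: replicate_append_same[symmetric])
qed

lemma repr_pow:
  assumes "b \<ge> 2" "n > 0"
  shows "repr b (n * b ^ k) = repr b n @ replicate k 0"
  using digits_pow[OF assms] by (simp add: repr_def)

lemma ds_pow:
  assumes "b \<ge> 2" "n > 0"
  shows "digit_sum b (n * b ^ k) = digit_sum b n"
  using digits_pow[OF assms] by (simp add: digit_sum_def)

lemma rev_pow:
  assumes "b \<ge> 2" "n > 0"
  shows "reversal b (n * b ^ k) = reversal b n"
  using repr_pow[OF assms] by (simp add: reversal_def fd_append fd_zeros)

lemma k_lt_pow:
  assumes "(b::nat) \<ge> 2" shows "k < b ^ k"
proof -
  have "k < 2 ^ k" by (rule less_exp)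
  also have "(2::nat) ^ k \<le> b ^ k" using assms by (rule power_mono) simp
  finally show ?thesis .
qed

lemma le_mult_pos: "(x::nat) > 0 \<Longrightarrow> y \<le> x * y"
  by simp

theorem corollary14:
  fixes b :: nat and I :: "nat list"
  assumes "b \<ge> 2" and "I \<noteq> []" and "\<forall>d\<in>set I. d < b"
  shows "infinite {N. wMRH b N \<and> sublist I (repr b N)}"
proof -
  define L where "L = length I"
  define u where "u = from_digits b (rev I)"
  define u' where "u' = from_digits b I"
  define ds where "ds = rev I @ replicate L 0"
  define X where "X = from_digits b ds + b ^ length ds * 1"
  have dsb: "\<forall>d\<in>set ds. d < b" using assms by (auto simp: ds_def)
  have d1: "digits b 1 = [1]" using assms(1) by (rule digits_1)
  have dX: "digits b X = ds @ [1]"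
    using digits_L2[OF assms(1) dsb, of 1] d1 by (simp add: X_def)
  have Xpos: "X > 0" using assms(1) by (simp add: X_def)
  have Xv: "X = u + b ^ (2*L)"
    by (simp add: X_def ds_def fd_append fd_zeros u_def L_def mult_2)
  have rX: "reversal b X = 1 + b * (b ^ L * u')"
    using dX by (simp add: reversal_def repr_def ds_def fd_append fd_zeros u'_def L_def)
  define M where "M = b*u*u' + b^L + b^(2*L+1)*u'"
  have Mpos: "M > 0" using assms(1) by (simp add: M_def)
  define N0 where "N0 = X * reversal b X"
  have pw: "b^(2*L) = b^L * b^L" by (simp add: mult_2 power_add)
  have pw2: "b^(2*L+1) = b * b^L * b^L" by (simp add: pw)
  have N0v: "N0 = u + b ^ L * M"
    unfolding N0_def rX unfolding Xv M_def pw pw2 by (simp add: algebra_simps)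
  have dN0: "digits b N0 = rev I @ digits b M"
    using digits_L2[OF assms(1) _ Mpos, of "rev I"] assms(3) N0v
    by (simp add: u_def L_def)
  have subN0: "sublist I (repr b N0)"
    using dN0 by (simp add: repr_def)
  have N0pos: "N0 > 0" using N0v Mpos assms(1) by simp
  define s where "s = digit_sum b N0"
  have mem: "N0 * b ^ k \<in> {N. wMRH b N \<and> sublist I (repr b N)}" if "k \<ge> s" for k
  proof -
    have "k < b ^ k" using assms(1) by (rule k_lt_pow)
    hence ge: "X * b ^ k \<ge> s" using that le_mult_pos[OF Xpos, of "b^k"] by linarith
    have "N0 * b ^ k = (X * b ^ k) * reversal b (X * b ^ k)"
      using rev_pow[OF assms(1) Xpos] by (simp add: N0_def algebra_simps)
    moreover have "digit_sum b (N0 * b ^ k) = s"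
      using ds_pow[OF assms(1) N0pos] by (simp add: s_def)
    ultimately have "N0 * b ^ k = ((X * b ^ k - s) + digit_sum b (N0 * b ^ k)) *
        reversal b ((X * b ^ k - s) + digit_sum b (N0 * b ^ k))"
      using ge by simp
    hence w: "wMRH b (N0 * b ^ k)" unfolding wMRH_def using N0pos assms(1) by auto
    have "sublist I (repr b (N0 * b ^ k))"
      using repr_pow[OF assms(1) N0pos] subN0 by (simp add: sublist_append_rightI sublist_order.order_trans[OF _ sublist_appendI[of "repr b N0" "[]"]]) (meson sublist_append_rightI sublist_order.order_trans)
    with w show ?thesis by simp
  qed
  show ?thesis
    unfolding infinite_nat_iff_unbounded_le
  proof
    fix m
    have "m + s < b ^ (m + s)" using assms(1) by (rule k_lt_pow)
    hence "m \<le> N0 * b ^ (m + s)" using le_mult_pos[OF N0pos, of "b^(m+s)"] by linarith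
    thus "\<exists>n\<ge>m. n \<in> {N. wMRH b N \<and> sublist I (repr b N)}"
      using mem[of "m+s"] by auto
  qed
qed

end
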